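(* Let $u_1,\dots,u_n$ be i.i.d. $\mathcal N(0,I_d/d)$ in $\mathbb R^d$ and suppose $n\ge c\,d^2/\log d$ for some fixed constant $c>0$. For any fixed $\epsilon>0$, with probability $1-e^{-\Omega(d)}$, $$\inf_{x\in S^{d-1}}\max_{j\in[n]}u_j^\top x\ \ge\ \sqrt{\frac{(2-\epsilon)\log d}{d}}.$$
   Context: $S^{d-1}$ is the unit sphere in $\mathbb R^d$. Statements hold for all sufficiently large $d$. *)

theory Defs
  imports "HOL-Probability.Probability"
begin

text \<open>Sample space for n i.i.d. vectors u_1..u_n ~ N(0, I_d/d) in R^d:
  the coordinate (j,i) (j < n, i < d) is u_j's i-th coordinate; all coordinates are
  independent centred Gaussians with variance 1/d (standard deviation 1/sqrt d).\<close>
definition gauss_sample :: "nat \<Rightarrow> nat \<Rightarrow> (nat \<times> nat \<Rightarrow> real) measure" where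
  "gauss_sample d n =
     PiM ({..<n} \<times> {..<d}) (\<lambda>_. density lborel (normal_density 0 (1 / sqrt (real d))))"

definition unit_sphere :: "nat \<Rightarrow> (nat \<Rightarrow> real) set" where
  "unit_sphere d = {x. (\<forall>i\<ge>d. x i = 0) \<and> (\<Sum>i<d. (x i)\<^sup>2) = 1}"

definition inf_max_proj :: "nat \<Rightarrow> nat \<Rightarrow> (nat \<times> nat \<Rightarrow> real) \<Rightarrow> real" where
  "inf_max_proj d n u =
     (INF x\<in>unit_sphere d. Max ((\<lambda>j. \<Sum>i<d. u (j, i) * x i) ` {..<n}))"

end

theory Submission
  imports Defs "HOL-Real_Asymp.Real_Asymp"
begin
abbreviation "Mg d \<equiv> density lborel (normal_density 0 (1 / sqrt (real d)))"
lemma prob_Mg: "d > 0 \<Longrightarrow> prob_space (Mg d)"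
  by (rule prob_space_normal_density) simp
lemma prob_gs: "d > 0 \<Longrightarrow> prob_space (gauss_sample d n)"
  unfolding gauss_sample_def by (intro prob_space_PiM prob_Mg)

lemma indep_coords:
  assumes d: "d > 0" and n: "n > 0"
  shows "prob_space.indep_vars (gauss_sample d n) (\<lambda>_. borel) (\<lambda>k \<omega>. \<omega> k) ({..<n} \<times> {..<d})"
proof -
  let ?I = "{..<n} \<times> {..<d}"
  let ?P = "gauss_sample d n"
  interpret prob_space ?P by (rule prob_gs[OF d])
  have I: "?I \<noteq> {}" using d n by auto
  have rv: "random_variable (Mg d) (\<lambda>\<omega>. \<omega> k)" if "k \<in> ?I" for k
    unfolding gauss_sample_def using that by (rule measurable_component_singleton)
  have e1: "distr ?P (PiM ?I (\<lambda>_. Mg d)) (\<lambda>x. \<lambda>k\<in>?I. x k) = distr ?P ?P (\<lambda>x. x)"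
      apply (rule distr_cong) 
        apply (rule refl)
       apply (simp add: gauss_sample_def)
      apply (simp add: gauss_sample_def space_PiM)
      done
  have e2: "distr ?P ?P (\<lambda>x. x) = ?P" by (rule distr_id2) simp
  have e3: "?P = PiM ?I (\<lambda>k. distr ?P (Mg d) (\<lambda>\<omega>. \<omega> k))"
      unfolding gauss_sample_def
      apply (rule PiM_cong[OF refl])
      apply (rule distr_PiM_component[symmetric])
      using prob_Mg d by auto
  have "indep_vars (\<lambda>_. Mg d) (\<lambda>k \<omega>. \<omega> k) ?I"
    apply (subst indep_vars_iff_distr_eq_PiM'[OF I rv], assumption)
    using e1 e2 e3 by simp
  then have "indep_vars (\<lambda>_. borel) (\<lambda>k \<omega>. (\<lambda>x. x) (\<omega> k)) ?I"
    by (rule indep_vars_compose2) (simp add: measurable_ident_sets)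
  then show ?thesis by simp
qed

lemma coord_distributed:
  assumes d: "d > 0" and k: "k \<in> {..<n} \<times> {..<d}"
  shows "distributed (gauss_sample d n) lborel (\<lambda>\<omega>. \<omega> k) (normal_density 0 (1 / sqrt (real d)))"
proof -
  let ?P = "gauss_sample d n"
  have m: "(\<lambda>\<omega>. \<omega> k) \<in> measurable ?P (Mg d)"
    unfolding gauss_sample_def using k by (rule measurable_component_singleton)
  have "distr ?P lborel (\<lambda>\<omega>. \<omega> k) = distr ?P (Mg d) (\<lambda>\<omega>. \<omega> k)"
    by (rule distr_cong[OF refl]) simp_all
  also have "\<dots> = Mg d" unfolding gauss_sample_def
    apply (rule distr_PiM_component) apply (rule prob_Mg[OF d]) apply (rule k) done
  finally have "distr ?P lborel (\<lambda>\<omega>. \<omega> k) = Mg d" .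
  moreover have "(\<lambda>\<omega>. \<omega> k) \<in> measurable ?P lborel"
    using measurable_compose[OF m measurable_ident_sets[of "Mg d" lborel]] by simp
  ultimately show ?thesis unfolding distributed_def by simp
qed

lemma row_distributed:
  assumes d: "d > 0" and j: "j < n" and y: "\<exists>i<d. y i \<noteq> 0"
  shows "distributed (gauss_sample d n) lborel (\<lambda>\<omega>. \<Sum>i<d. y i * \<omega> (j, i))
           (normal_density 0 (sqrt ((\<Sum>i<d. (y i)\<^sup>2) / real d)))"
proof -
  let ?P = "gauss_sample d n"
  let ?I = "{..<n} \<times> {..<d}"
  let ?s = "1 / sqrt (real d)"
  interpret prob_space ?P by (rule prob_gs[OF d])
  define Iy where "Iy = {i. i < d \<and> y i \<noteq> 0}"
  define I' where "I' = Pair j ` Iy"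
  have fin: "finite I'" unfolding I'_def Iy_def by auto
  have ne: "I' \<noteq> {}" unfolding I'_def Iy_def using y by auto
  have sub: "I' \<subseteq> ?I" unfolding I'_def Iy_def using j by auto
  have ind0: "indep_vars (\<lambda>_. borel) (\<lambda>k \<omega>. \<omega> k) ?I" using indep_coords[OF d] j by simp
  have ind: "indep_vars (\<lambda>_. borel) (\<lambda>k \<omega>. y (snd k) * \<omega> k) I'"
    using indep_vars_compose2[OF indep_vars_subset[OF ind0 sub], of "\<lambda>k x. y (snd k) * x" "\<lambda>_. borel"]
    by simp
  have pos: "0 < \<bar>y (snd k)\<bar> * ?s" if "k \<in> I'" for k
    using that d unfolding I'_def Iy_def by auto
  have dist: "distributed ?P lborel (\<lambda>\<omega>. y (snd k) * \<omega> k) (normal_density 0 (\<bar>y (snd k)\<bar> * ?s))"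
    if "k \<in> I'" for k
  proof -
    have "y (snd k) \<noteq> 0" using that unfolding I'_def Iy_def by auto
    have c: "distributed ?P lborel (\<lambda>\<omega>. \<omega> k) (normal_density 0 ?s)"
      using coord_distributed[OF d] that sub by auto
    have s0: "0 < ?s" using d by simp
    from normal_density_affine[OF c s0 \<open>y (snd k) \<noteq> 0\<close>, where \<beta>=0]
    show ?thesis by simp
  qed
  have "distributed ?P lborel (\<lambda>x. \<Sum>k\<in>I'. y (snd k) * x k)
          (normal_density (\<Sum>k\<in>I'. 0) (sqrt (\<Sum>k\<in>I'. (\<bar>y (snd k)\<bar> * ?s)\<^sup>2)))"
    by (rule sum_indep_normal[OF fin ne ind pos dist])
  moreover have "(\<lambda>x. \<Sum>k\<in>I'. y (snd k) * x k) = (\<lambda>\<omega>. \<Sum>i<d. y i * \<omega> (j, i))"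
  proof
    fix x :: "nat \<times> nat \<Rightarrow> real"
    have "(\<Sum>k\<in>I'. y (snd k) * x k) = (\<Sum>i\<in>Iy. y i * x (j, i))"
      unfolding I'_def by (subst sum.reindex) (auto simp: inj_on_def)
    also have "\<dots> = (\<Sum>i<d. y i * x (j, i))"
      by (rule sum.mono_neutral_left) (auto simp: Iy_def)
    finally show "(\<Sum>k\<in>I'. y (snd k) * x k) = (\<Sum>i<d. y i * x (j, i))" .
  qed
  moreover have "(\<Sum>k\<in>I'. (\<bar>y (snd k)\<bar> * ?s)\<^sup>2) = (\<Sum>i<d. (y i)\<^sup>2) / real d"
  proof -
    have "(\<Sum>k\<in>I'. (\<bar>y (snd k)\<bar> * ?s)\<^sup>2) = (\<Sum>i\<in>Iy. (y i)\<^sup>2 / real d)"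
      unfolding I'_def by (subst sum.reindex) (auto simp: inj_on_def power_mult_distrib power_divide)
    also have "\<dots> = (\<Sum>i<d. (y i)\<^sup>2 / real d)"
      by (rule sum.mono_neutral_left) (auto simp: Iy_def)
    finally show ?thesis by (simp add: sum_divide_distrib)
  qed
  ultimately show ?thesis by simp
qed

lemma normal_lower_tail:
  assumes X: "distributed M lborel X (normal_density 0 \<tau>)" and t: "\<tau> > 0" and b: "b \<ge> 0"
    and P: "prob_space M"
  shows "measure M {\<omega>\<in>space M. b \<le> X \<omega>} \<ge> exp (-((b/\<tau>+1)\<^sup>2)/2) / sqrt (2*pi)"
proof -
  interpret prob_space M by (rule P)
  define c where "c = normal_density 0 \<tau> (b+\<tau>)"
  have c0: "c \<ge> 0" unfolding c_def by simp
  have eq: "{\<omega>\<in>space M. b \<le> X \<omega>} = X -` {b..} \<inter> space M" by auto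
  have "emeasure M {\<omega>\<in>space M. b \<le> X \<omega>} = (\<integral>\<^sup>+x. ennreal (normal_density 0 \<tau> x) * indicator {b..} x \<partial>lborel)"
    unfolding eq by (rule distributed_emeasure[OF X]) simp
  also have "\<dots> \<ge> (\<integral>\<^sup>+x. ennreal c * indicator {b..b+\<tau>} x \<partial>lborel)"
  proof (rule nn_integral_mono)
    fix x :: real
    show "ennreal c * indicator {b..b+\<tau>} x \<le> ennreal (normal_density 0 \<tau> x) * indicator {b..} x"
    proof (cases "x \<in> {b..b+\<tau>}")
      case True
      then have x: "b \<le> x" "x \<le> b + \<tau>" by auto
      have "x\<^sup>2 \<le> (b+\<tau>)\<^sup>2" using x b t by (intro power_mono) auto
      then have "c \<le> normal_density 0 \<tau> x"
        unfolding c_def normal_density_def using t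
        by (intro mult_left_mono) (auto simp: divide_simps)
      then show ?thesis using True by (auto simp: indicator_def)
    qed (auto simp: indicator_def)
  qed
  also have "(\<integral>\<^sup>+x. ennreal c * indicator {b..b+\<tau>} x \<partial>lborel) = ennreal c * ennreal \<tau>"
    using t by (subst nn_integral_cmult_indicator) auto
  also have "ennreal c * ennreal \<tau> = ennreal (exp (-((b/\<tau>+1)\<^sup>2)/2) / sqrt (2*pi))"
  proof -
    have "c * \<tau> = exp (-((b/\<tau>+1)\<^sup>2)/2) / sqrt (2*pi)"
    proof -
      have "sqrt (2 * pi * \<tau>\<^sup>2) = sqrt (2*pi) * \<tau>" using t by (simp add: real_sqrt_mult)
      moreover have "(b + \<tau>)\<^sup>2 / (2 * \<tau>\<^sup>2) = (b/\<tau>+1)\<^sup>2/2" using t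
        by (simp add: power2_eq_square field_simps)
      ultimately show ?thesis unfolding c_def normal_density_def using t by simp
    qed
    moreover have "ennreal c * ennreal \<tau> = ennreal (c*\<tau>)" using c0 t by (simp add: ennreal_mult)
    ultimately show ?thesis by simp
  qed
  finally show ?thesis by (simp add: emeasure_eq_measure)
qed

lemma normal_upper_tail:
  assumes X: "distributed M lborel X (normal_density 0 \<sigma>)" and s: "\<sigma> > 0" and m: "m > 0"
    and P: "prob_space M"
  shows "measure M {\<omega>\<in>space M. m < \<bar>X \<omega>\<bar>} \<le> \<sigma>\<^sup>2 / m\<^sup>2"
proof -
  interpret prob_space M by (rule P)
  have eq: "{\<omega>\<in>space M. m < \<bar>X \<omega>\<bar>} = X -` {x. m < \<bar>x\<bar>} \<inter> space M" by auto
  have hb: "has_bochner_integral lborel (\<lambda>x. normal_density 0 \<sigma> x * (x - 0) ^ (2 * 1)) (fact (2 * 1) / ((2 / \<sigma>\<^sup>2)^1 * fact 1))"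
    by (rule normal_moment_even) (rule s)
  have hb2: "has_bochner_integral lborel (\<lambda>x. normal_density 0 \<sigma> x * x\<^sup>2 / m\<^sup>2) (\<sigma>\<^sup>2 / m\<^sup>2)"
  proof -
    have "fact (2 * 1) / ((2 / \<sigma>\<^sup>2)^1 * fact 1) = (\<sigma>\<^sup>2::real)" using s by simp
    with hb have "has_bochner_integral lborel (\<lambda>x. normal_density 0 \<sigma> x * x\<^sup>2) (\<sigma>\<^sup>2)" by simp
    from has_bochner_integral_divide_zero[OF this, of "m\<^sup>2"] show ?thesis by simp
  qed
  have "emeasure M {\<omega>\<in>space M. m < \<bar>X \<omega>\<bar>} = (\<integral>\<^sup>+x. ennreal (normal_density 0 \<sigma> x) * indicator {x. m < \<bar>x\<bar>} x \<partial>lborel)"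
    unfolding eq by (rule distributed_emeasure[OF X]) simp
  also have "\<dots> \<le> (\<integral>\<^sup>+x. ennreal (normal_density 0 \<sigma> x * x\<^sup>2 / m\<^sup>2) \<partial>lborel)"
  proof (rule nn_integral_mono)
    fix x :: real
    show "ennreal (normal_density 0 \<sigma> x) * indicator {x. m < \<bar>x\<bar>} x \<le> ennreal (normal_density 0 \<sigma> x * x\<^sup>2 / m\<^sup>2)"
    proof (cases "m < \<bar>x\<bar>")
      case True
      then have "m\<^sup>2 \<le> x\<^sup>2" using m by (metis abs_le_square_iff abs_of_pos less_imp_le)
      then have "1 \<le> x\<^sup>2 / m\<^sup>2" using m by simp
      then have "normal_density 0 \<sigma> x * 1 \<le> normal_density 0 \<sigma> x * (x\<^sup>2 / m\<^sup>2)"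
        by (intro mult_left_mono) auto
      then show ?thesis using True by (auto simp: indicator_def intro!: ennreal_leI)
    qed (auto simp: indicator_def)
  qed
  also have "\<dots> = ennreal (\<sigma>\<^sup>2 / m\<^sup>2)"
    using hb2 unfolding has_bochner_integral_iff
    by (subst nn_integral_eq_integral) auto
  finally show ?thesis using s m by (simp add: emeasure_eq_measure)
qed

lemma comp_meas_PiM:
  assumes "\<And>i. i \<in> I \<Longrightarrow> sets (M i) = sets borel"
  shows "(\<lambda>x. x k) \<in> borel_measurable (PiM I M)"
proof (cases "k \<in> I")
  case True
  have "(\<lambda>x. x k) \<in> measurable (PiM I M) (M k)" by (rule measurable_component_singleton[OF True])
  moreover have "(\<lambda>x. x) \<in> measurable (M k) borel" using assms[OF True] by (rule measurable_ident_sets)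
  ultimately show ?thesis using measurable_compose by fastforce
next
  case False
  have "(\<lambda>x. undefined) \<in> borel_measurable (PiM I M)" by simp
  then show ?thesis
    by (rule measurable_cong[THEN iffD1, rotated]) (use False in \<open>auto simp: space_PiM PiE_def extensional_def\<close>)
qed

lemma coord_meas[measurable]: "(\<lambda>\<omega>. \<omega> k) \<in> borel_measurable (gauss_sample d n)"
  unfolding gauss_sample_def by (rule comp_meas_PiM) simp

definition Qrow :: "nat \<Rightarrow> (nat \<Rightarrow> real) \<Rightarrow> real \<Rightarrow> real \<Rightarrow> nat \<Rightarrow> (nat \<times> nat \<Rightarrow> real) \<Rightarrow> bool" where
  "Qrow d y b M j \<omega> \<longleftrightarrow> b \<le> (\<Sum>i<d. y i * \<omega> (j, i)) \<and> (\<forall>i<d. \<bar>\<omega> (j, i)\<bar> \<le> M)"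

lemma Qrow_sets: "{\<omega> \<in> space (gauss_sample d n). Qrow d y b M j \<omega>} \<in> sets (gauss_sample d n)"
  unfolding Qrow_def by measurable

lemma row_event_prob:
  assumes d: "d > 0" and j: "j < n" and rho: "0 < \<rho>" "\<rho> \<le> (\<Sum>i<d. (y i)\<^sup>2)"
    and b: "b \<ge> 0" and M: "M > 0"
  shows "measure (gauss_sample d n) {\<omega> \<in> space (gauss_sample d n). Qrow d y b M j \<omega>}
     \<ge> exp (-((b / sqrt (\<rho> / real d) + 1)\<^sup>2) / 2) / sqrt (2*pi) - 1 / M\<^sup>2"
proof -
  let ?P = "gauss_sample d n"
  interpret prob_space ?P by (rule prob_gs[OF d])
  let ?S = "\<lambda>\<omega>. \<Sum>i<d. y i * \<omega> (j, i)"
  define \<tau> where "\<tau> = sqrt ((\<Sum>i<d. (y i)\<^sup>2) / real d)"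
  have ex: "\<exists>i<d. y i \<noteq> 0"
  proof (rule ccontr)
    assume "\<not> ?thesis"
    then have "(\<Sum>i<d. (y i)\<^sup>2) = 0" by simp
    with rho show False by simp
  qed
  have t0: "\<tau> > 0" unfolding \<tau>_def using rho d by simp
  have tr: "sqrt (\<rho> / real d) \<le> \<tau>" unfolding \<tau>_def using rho d by (simp add: divide_right_mono)
  have sr: "sqrt (\<rho> / real d) > 0" using rho d by simp
  have X: "distributed ?P lborel ?S (normal_density 0 \<tau>)"
    unfolding \<tau>_def by (rule row_distributed[OF d j ex])
  have low: "measure ?P {\<omega>\<in>space ?P. b \<le> ?S \<omega>} \<ge> exp (-((b/\<tau>+1)\<^sup>2)/2) / sqrt (2*pi)"
    by (rule normal_lower_tail[OF X t0 b]) (rule prob_gs[OF d])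
  have "b / \<tau> \<le> b / sqrt (\<rho> / real d)" using b sr tr t0 by (intro divide_left_mono) (auto intro: mult_pos_pos)
  then have "(b/\<tau>+1)\<^sup>2 \<le> (b / sqrt (\<rho> / real d) + 1)\<^sup>2" using b t0 by (intro power_mono) auto
  then have "exp (-((b / sqrt (\<rho> / real d) + 1)\<^sup>2) / 2) / sqrt (2*pi) \<le> exp (-((b/\<tau>+1)\<^sup>2)/2) / sqrt (2*pi)"
    by (intro divide_right_mono) auto
  with low have low2: "measure ?P {\<omega>\<in>space ?P. b \<le> ?S \<omega>} \<ge> exp (-((b / sqrt (\<rho> / real d) + 1)\<^sup>2) / 2) / sqrt (2*pi)"
    by linarith
  have up: "measure ?P {\<omega>\<in>space ?P. M < \<bar>\<omega> (j, i)\<bar>} \<le> 1 / real d / M\<^sup>2" if "i < d" for i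
  proof -
    have c: "distributed ?P lborel (\<lambda>\<omega>. \<omega> (j, i)) (normal_density 0 (1 / sqrt (real d)))"
      using coord_distributed[OF d] that j by simp
    from normal_upper_tail[OF c _ M prob_gs[OF d]] d show ?thesis by (simp add: power_divide)
  qed
  let ?A = "\<lambda>i. {\<omega>\<in>space ?P. M < \<bar>\<omega> (j, i)\<bar>}"
  have sub: "{\<omega>\<in>space ?P. b \<le> ?S \<omega>} \<subseteq> {\<omega> \<in> space ?P. Qrow d y b M j \<omega>} \<union> (\<Union>i\<in>{..<d}. ?A i)"
    unfolding Qrow_def by (auto simp: not_le)
  have s2: "(\<Union>i\<in>{..<d}. ?A i) \<in> events" by measurable
  have "measure ?P {\<omega>\<in>space ?P. b \<le> ?S \<omega>} \<le> measure ?P ({\<omega> \<in> space ?P. Qrow d y b M j \<omega>} \<union> (\<Union>i\<in>{..<d}. ?A i))"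
    by (rule finite_measure_mono[OF sub]) (intro sets.Un Qrow_sets sets.finite_UN; measurable)
  also have "\<dots> \<le> measure ?P {\<omega> \<in> space ?P. Qrow d y b M j \<omega>} + measure ?P (\<Union>i\<in>{..<d}. ?A i)"
    by (rule measure_subadditive[OF Qrow_sets s2]) simp_all
  also have "measure ?P (\<Union>i\<in>{..<d}. ?A i) \<le> (\<Sum>i<d. measure ?P (?A i))"
    by (rule finite_measure_subadditive_finite) (simp, rule image_subsetI, measurable)
  also have "\<dots> \<le> (\<Sum>i<d. 1 / real d / M\<^sup>2)" by (rule sum_mono) (rule up, simp)
  also have "\<dots> = 1 / M\<^sup>2" using d by simp
  finally show ?thesis using low2 by linarith
qed


lemma Qrow_restrict: "Qrow d y b M j (restrict \<omega> ({j}\<times>{..<d})) = Qrow d y b M j \<omega>"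
  unfolding Qrow_def by (intro conj_cong arg_cong2[where f="(\<le>)"] sum.cong all_cong) auto

lemma no_row_prob:
  assumes d: "d > 0" and n: "n > 0"
    and q: "\<And>j. j < n \<Longrightarrow> measure (gauss_sample d n) {\<omega> \<in> space (gauss_sample d n). Qrow d y b M j \<omega>} \<ge> q"
  shows "measure (gauss_sample d n) {\<omega> \<in> space (gauss_sample d n). \<forall>j<n. \<not> Qrow d y b M j \<omega>} \<le> exp (- q * real n)"
proof -
  let ?P = "gauss_sample d n"
  interpret prob_space ?P by (rule prob_gs[OF d])
  have ind: "indep_vars (\<lambda>j. PiM ({j}\<times>{..<d}) (\<lambda>_. borel)) (\<lambda>j \<omega>. restrict (\<lambda>k. \<omega> k) ({j}\<times>{..<d})) {..<n}"
    by (rule indep_vars_restrict[OF indep_coords[OF d n]]) (auto simp: disjoint_family_on_def)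
  have ms: "{x \<in> space (PiM ({j}\<times>{..<d}) (\<lambda>_. borel)). \<not> Qrow d y b M j x} \<in> sets (PiM ({j}\<times>{..<d}) (\<lambda>_. borel))" for j
  proof -
    have [measurable]: "\<And>k. (\<lambda>x. x k) \<in> borel_measurable (PiM ({j}\<times>{..<d}) (\<lambda>_. borel))"
      by (rule comp_meas_PiM) simp
    show ?thesis unfolding Qrow_def by measurable
  qed
  have ie: "indep_events (\<lambda>j. {\<omega>\<in>space ?P. \<not> Qrow d y b M j (restrict (\<lambda>k. \<omega> k) ({j}\<times>{..<d}))}) {..<n}"
    by (rule indep_eventsI_indep_vars[OF ind ms])
  define E where "E j = {\<omega>\<in>space ?P. \<not> Qrow d y b M j \<omega>}" for j
  have ie2: "indep_events E {..<n}"
    using ie unfolding E_def by (simp add: Qrow_restrict)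
  have "prob (\<Inter>j\<in>{..<n}. E j) = (\<Prod>j\<in>{..<n}. prob (E j))"
    using ie2 n unfolding indep_events_def by auto
  moreover have "{\<omega> \<in> space ?P. \<forall>j<n. \<not> Qrow d y b M j \<omega>} = (\<Inter>j\<in>{..<n}. E j)"
    using n unfolding E_def by auto
  moreover have "prob (E j) = 1 - prob {\<omega> \<in> space ?P. Qrow d y b M j \<omega>}" for j
  proof -
    have "E j = space ?P - {\<omega> \<in> space ?P. Qrow d y b M j \<omega>}" unfolding E_def by auto
    then show ?thesis using prob_compl[OF Qrow_sets] by simp
  qed
  ultimately have eq: "prob {\<omega> \<in> space ?P. \<forall>j<n. \<not> Qrow d y b M j \<omega>} = (\<Prod>j\<in>{..<n}. 1 - prob {\<omega> \<in> space ?P. Qrow d y b M j \<omega>})"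
    by simp
  also have "\<dots> \<le> (\<Prod>j\<in>{..<n}. exp (- q))"
  proof (rule prod_mono)
    fix j assume "j \<in> {..<n}"
    then have "q \<le> prob {\<omega> \<in> space ?P. Qrow d y b M j \<omega>}" using q by simp
    moreover have "1 - q \<le> exp (- q)" using exp_ge_add_one_self[of "-q"] by simp
    ultimately show "0 \<le> 1 - prob {\<omega> \<in> space ?P. Qrow d y b M j \<omega>} \<and> 1 - prob {\<omega> \<in> space ?P. Qrow d y b M j \<omega>} \<le> exp (- q)"
      by (simp add: prob_le_1)
  qed
  also have "\<dots> = exp (- q * real n)" by (simp add: exp_of_nat_mult[symmetric] mult.commute)
  finally show ?thesis .
qed

definition gfun :: "nat \<Rightarrow> nat \<Rightarrow> (nat \<times> nat \<Rightarrow> real) \<Rightarrow> (nat \<Rightarrow> real) \<Rightarrow> real" where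
  "gfun d n u x = Max ((\<lambda>j. \<Sum>i<d. u (j, i) * x i) ` {..<n})"

lemma gfun_ge: "j < n \<Longrightarrow> (\<Sum>i<d. u (j, i) * x i) \<le> gfun d n u x"
  unfolding gfun_def by (rule Max_ge) auto

lemma gfun_attained: "n > 0 \<Longrightarrow> \<exists>j<n. gfun d n u x = (\<Sum>i<d. u (j, i) * x i)"
proof -
  assume n: "n > 0"
  have "gfun d n u x \<in> (\<lambda>j. \<Sum>i<d. u (j, i) * x i) ` {..<n}"
    unfolding gfun_def by (rule Max_in) (use n in auto)
  then show ?thesis by auto
qed

lemma sphere_coord_le: "x \<in> unit_sphere d \<Longrightarrow> \<bar>x i\<bar> \<le> 1"
proof -
  assume x: "x \<in> unit_sphere d"
  show ?thesis
  proof (cases "i < d")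
    case True
    have "(x i)\<^sup>2 \<le> (\<Sum>i<d. (x i)\<^sup>2)"
      by (rule member_le_sum) (use True in auto)
    also have "\<dots> = 1" using x unfolding unit_sphere_def by simp
    finally show ?thesis by (simp add: abs_square_le_1)
  next
    case False then show ?thesis using x unfolding unit_sphere_def by simp
  qed
qed

lemma inf_ge_iff:
  assumes d: "d > 0" and n: "n > 0"
  shows "(t \<le> inf_max_proj d n u) \<longleftrightarrow> (\<forall>x\<in>unit_sphere d. t \<le> gfun d n u x)"
proof -
  have ne: "unit_sphere d \<noteq> {}"
  proof -
    have "(\<lambda>i. if i = 0 then 1 else 0 :: real) \<in> unit_sphere d"
    proof -
      have "(\<Sum>i<d. ((if i = 0 then 1 else 0 :: real))\<^sup>2) = (\<Sum>i<d. if i = 0 then 1 else 0)"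
        by (rule sum.cong) auto
      also have "\<dots> = 1" using d by simp
      finally show ?thesis unfolding unit_sphere_def using d by simp
    qed
    then show ?thesis by auto
  qed
  have bdd: "bdd_below (gfun d n u ` unit_sphere d)"
  proof (rule bdd_belowI2)
    fix x assume x: "x \<in> unit_sphere d"
    have "- (\<Sum>i<d. \<bar>u (0, i)\<bar>) \<le> (\<Sum>i<d. u (0, i) * x i)"
    proof -
      have "- (\<Sum>i<d. \<bar>u (0, i)\<bar>) = (\<Sum>i<d. - \<bar>u (0, i)\<bar>)" by (simp add: sum_negf)
      also have "\<dots> \<le> (\<Sum>i<d. u (0, i) * x i)"
      proof (rule sum_mono)
        fix i
        have "\<bar>u (0, i) * x i\<bar> \<le> \<bar>u (0, i)\<bar>"
          using sphere_coord_le[OF x, of i] by (simp add: abs_mult mult_left_le)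
        then show "- \<bar>u (0, i)\<bar> \<le> u (0, i) * x i" by linarith
      qed
      finally show ?thesis .
    qed
    also have "\<dots> \<le> gfun d n u x" by (rule gfun_ge) (rule n)
    finally show "- (\<Sum>i<d. \<bar>u (0, i)\<bar>) \<le> gfun d n u x" .
  qed
  show ?thesis unfolding inf_max_proj_def gfun_def[symmetric]
    by (rule le_cINF_iff[OF ne bdd])
qed


definition Dq :: "nat \<Rightarrow> (nat \<Rightarrow> real) set" where
  "Dq d = (\<lambda>xs i. if i < d \<and> i < length xs then xs ! i else 0) ` lists \<rat>"

lemma Dq_countable: "countable (Dq d)"
  unfolding Dq_def by (intro countable_image countable_lists countable_rat)

lemma Dq_ne: "Dq d \<noteq> {}"
  unfolding Dq_def by auto

lemma Dq_zero: "q \<in> Dq d \<Longrightarrow> i \<ge> d \<Longrightarrow> q i = 0"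
  unfolding Dq_def by auto

lemma gfun_scale:
  assumes n: "n > 0" and c: "c \<ge> 0"
  shows "gfun d n u (\<lambda>i. c * x i) = c * gfun d n u x"
proof -
  have "gfun d n u (\<lambda>i. c * x i) = Max ((*) c ` ((\<lambda>j. \<Sum>i<d. u (j, i) * x i) ` {..<n}))"
    unfolding gfun_def image_image
    by (rule arg_cong[where f=Max], rule image_cong[OF refl]) (simp add: sum_distrib_left ac_simps)
  also have "\<dots> = c * gfun d n u x"
    unfolding gfun_def
    by (rule mono_Max_commute[symmetric]) (use n c in \<open>auto intro!: monoI mult_left_mono\<close>)
  finally show ?thesis .
qed

lemma eps_le:
  fixes t a C :: real
  assumes C: "C \<ge> 0" and h: "\<And>\<eta>. \<eta> > 0 \<Longrightarrow> t - C * \<eta> \<le> a"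
  shows "t \<le> a"
proof (rule ccontr)
  assume "\<not> t \<le> a"
  then have ta: "t - a > 0" by simp
  define \<eta> where "\<eta> = (t - a) / (2 * (C + 1))"
  have e: "\<eta> > 0" unfolding \<eta>_def using ta C by simp
  have "C * \<eta> < t - a"
  proof -
    have "C * \<eta> = (t - a) * (C / (2 * (C + 1)))" unfolding \<eta>_def by simp
    also have "\<dots> < (t - a) * 1" using ta C by (intro mult_strict_left_mono) auto
    finally show ?thesis by simp
  qed
  with h[OF e] show False by simp
qed

lemma sphere_iff_rat:
  assumes d: "d > 0" and n: "n > 0"
  shows "(\<forall>x\<in>unit_sphere d. t \<le> gfun d n u x) \<longleftrightarrow> (\<forall>q\<in>Dq d. t * L2_set q {..<d} \<le> gfun d n u q)"
proof
  assume H: "\<forall>x\<in>unit_sphere d. t \<le> gfun d n u x"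
  show "\<forall>q\<in>Dq d. t * L2_set q {..<d} \<le> gfun d n u q"
  proof
    fix q assume q: "q \<in> Dq d"
    define s where "s = L2_set q {..<d}"
    show "t * L2_set q {..<d} \<le> gfun d n u q"
    proof (cases "s = 0")
      case True
      then have z: "\<forall>i\<in>{..<d}. q i = 0" unfolding s_def by (simp add: L2_set_eq_0_iff)
      obtain j where "j < n" "gfun d n u q = (\<Sum>i<d. u (j, i) * q i)" using gfun_attained[OF n] by blast
      then have "gfun d n u q = 0" using z by simp
      then show ?thesis using True unfolding s_def by simp
    next
      case False
      then have s0: "s > 0" unfolding s_def using L2_set_nonneg[of q "{..<d}"] by linarith
      define x where "x i = q i / s" for i
      have s2: "s\<^sup>2 = (\<Sum>i<d. (q i)\<^sup>2)" unfolding s_def L2_set_def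
        by (simp add: sum_nonneg)
      have xs: "x \<in> unit_sphere d"
        unfolding unit_sphere_def x_def
      proof safe
        fix i assume "d \<le> i" then show "q i / s = 0" using Dq_zero[OF q] by simp
      next
        have "(\<Sum>i<d. (q i / s)\<^sup>2) = (\<Sum>i<d. (q i)\<^sup>2) / s\<^sup>2"
          by (simp add: power_divide sum_divide_distrib)
        moreover have "(\<Sum>i<d. (q i)\<^sup>2) \<noteq> 0" using s2 s0 by (metis power_not_zero order_less_irrefl)
        ultimately show "(\<Sum>i<d. (q i / s)\<^sup>2) = 1" using s2 s0 by simp
      qed
      have "q = (\<lambda>i. s * x i)" unfolding x_def using s0 by auto
      then have "gfun d n u q = s * gfun d n u x" using gfun_scale[OF n, of s d u x] s0 by simp
      moreover have "t \<le> gfun d n u x" using H xs by blast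
      ultimately show ?thesis unfolding s_def[symmetric] using s0
        by (simp add: mult.commute mult_left_mono)
    qed
  qed
next
  assume H: "\<forall>q\<in>Dq d. t * L2_set q {..<d} \<le> gfun d n u q"
  show "\<forall>x\<in>unit_sphere d. t \<le> gfun d n u x"
  proof
    fix x assume x: "x \<in> unit_sphere d"
    define U where "U = (\<Sum>j<n. \<Sum>i<d. \<bar>u (j, i)\<bar>)"
    have U0: "U \<ge> 0" unfolding U_def by (intro sum_nonneg) auto
    have L2x: "L2_set x {..<d} = 1" using x unfolding unit_sphere_def L2_set_def by simp
    show "t \<le> gfun d n u x"
    proof (rule eps_le[of "\<bar>t\<bar> * real d + U"])
      show "0 \<le> \<bar>t\<bar> * real d + U" using U0 by simp
    next
      fix \<eta> :: real assume e: "\<eta> > 0"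
      have "\<forall>i. \<exists>r\<in>\<rat>. x i - \<eta> < r \<and> r < x i + \<eta>"
        using e by (intro allI Rats_dense_in_real) simp
      then obtain r where r: "\<And>i. r i \<in> \<rat>" "\<And>i. x i - \<eta> < r i" "\<And>i. r i < x i + \<eta>"
        by metis
      define q where "q i = (if i < d then r i else 0)" for i
      have qD: "q \<in> Dq d"
      proof -
        have "map r [0..<d] \<in> lists \<rat>" using r(1) by auto
        moreover have "q = (\<lambda>i. if i < d \<and> i < length (map r [0..<d]) then (map r [0..<d]) ! i else 0)"
          unfolding q_def by auto
        ultimately show ?thesis unfolding Dq_def by blast
      qed
      have qx: "\<bar>x i - q i\<bar> \<le> \<eta>" if "i < d" for i
        using r(2)[of i] r(3)[of i] that unfolding q_def by auto
      have dsum: "L2_set (\<lambda>i. x i - q i) {..<d} \<le> real d * \<eta>"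
      proof -
        have "L2_set (\<lambda>i. x i - q i) {..<d} \<le> (\<Sum>i<d. \<bar>x i - q i\<bar>)" by (rule L2_set_le_sum_abs)
        also have "\<dots> \<le> (\<Sum>i<d. \<eta>)" by (rule sum_mono) (simp add: qx)
        finally show ?thesis by simp
      qed
      have dsum': "L2_set (\<lambda>i. q i - x i) {..<d} \<le> real d * \<eta>"
      proof -
        have "L2_set (\<lambda>i. q i - x i) {..<d} = L2_set (\<lambda>i. x i - q i) {..<d}"
          unfolding L2_set_def by (simp add: power2_commute)
        then show ?thesis using dsum by simp
      qed
      have tri1: "L2_set x {..<d} \<le> L2_set q {..<d} + L2_set (\<lambda>i. x i - q i) {..<d}"
        using L2_set_triangle_ineq[of q "\<lambda>i. x i - q i" "{..<d}"] by simp
      have tri2: "L2_set q {..<d} \<le> L2_set x {..<d} + L2_set (\<lambda>i. q i - x i) {..<d}"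
        using L2_set_triangle_ineq[of x "\<lambda>i. q i - x i" "{..<d}"] by simp
      have Lq: "\<bar>L2_set q {..<d} - 1\<bar> \<le> real d * \<eta>" using tri1 tri2 dsum dsum' L2x by linarith
      have tq: "t - \<bar>t\<bar> * real d * \<eta> \<le> t * L2_set q {..<d}"
      proof -
        have "\<bar>t * L2_set q {..<d} - t\<bar> = \<bar>t\<bar> * \<bar>L2_set q {..<d} - 1\<bar>"
          by (simp add: abs_mult[symmetric] right_diff_distrib)
        also have "\<dots> \<le> \<bar>t\<bar> * (real d * \<eta>)" by (rule mult_left_mono[OF Lq]) simp
        finally show ?thesis by (simp add: mult.assoc)
      qed
      obtain j where j: "j < n" "gfun d n u q = (\<Sum>i<d. u (j, i) * q i)" using gfun_attained[OF n] by blast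
      have "(\<Sum>i<d. u (j, i) * q i) - U * \<eta> \<le> (\<Sum>i<d. u (j, i) * x i)"
      proof -
        have "(\<Sum>i<d. u (j, i) * q i) - (\<Sum>i<d. u (j, i) * x i) = (\<Sum>i<d. u (j, i) * (q i - x i))"
          by (simp add: sum_subtractf right_diff_distrib)
        also have "\<dots> \<le> (\<Sum>i<d. \<bar>u (j, i)\<bar> * \<eta>)"
        proof (rule sum_mono)
          fix i assume "i \<in> {..<d}"
          then have "\<bar>q i - x i\<bar> \<le> \<eta>" using qx by (simp add: abs_minus_commute)
          then have "\<bar>u (j, i) * (q i - x i)\<bar> \<le> \<bar>u (j, i)\<bar> * \<eta>"
            by (simp add: abs_mult mult_left_mono)
          then show "u (j, i) * (q i - x i) \<le> \<bar>u (j, i)\<bar> * \<eta>" by linarith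
        qed
        also have "\<dots> = (\<Sum>i<d. \<bar>u (j, i)\<bar>) * \<eta>" by (simp add: sum_distrib_right)
        also have "\<dots> \<le> U * \<eta>"
        proof (rule mult_right_mono)
          show "(\<Sum>i<d. \<bar>u (j, i)\<bar>) \<le> U" unfolding U_def
            by (rule member_le_sum[where f="\<lambda>j. \<Sum>i<d. \<bar>u (j, i)\<bar>"]) (use j in \<open>auto intro: sum_nonneg\<close>)
        qed (use e in simp)
        finally show ?thesis by simp
      qed
      also have "\<dots> \<le> gfun d n u x" by (rule gfun_ge[OF j(1)])
      finally have "gfun d n u q - U * \<eta> \<le> gfun d n u x" using j by simp
      moreover have "t * L2_set q {..<d} \<le> gfun d n u q" using H qD by blast
      ultimately show "t - (\<bar>t\<bar> * real d + U) * \<eta> \<le> gfun d n u x" using tq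
        by (simp add: algebra_simps)
    qed
  qed
qed

lemma target_sets:
  assumes d: "d > 0" and n: "n > 0"
  shows "{u \<in> space (gauss_sample d n). t \<le> inf_max_proj d n u} \<in> sets (gauss_sample d n)"
proof -
  let ?P = "gauss_sample d n"
  have eq: "{u \<in> space ?P. t \<le> inf_max_proj d n u} = (\<Inter>q\<in>Dq d. {u \<in> space ?P. t * L2_set q {..<d} \<le> gfun d n u q})"
    using Dq_ne by (auto simp: inf_ge_iff[OF d n] sphere_iff_rat[OF d n])
  show ?thesis unfolding eq
  proof (rule sets.countable_INT'[OF Dq_countable Dq_ne])
    show "(\<lambda>q. {u \<in> space ?P. t * L2_set q {..<d} \<le> gfun d n u q}) ` Dq d \<subseteq> sets ?P"
      unfolding gfun_def by (rule image_subsetI) measurable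
  qed
qed

definition grid :: "nat \<Rightarrow> real \<Rightarrow> int \<Rightarrow> (nat \<Rightarrow> real) set" where
  "grid d \<eta> K = (\<lambda>k i. if i < d then \<eta> * real_of_int (k i) else 0) ` (PiE {..<d} (\<lambda>_. {-K..K}))"

definition net :: "nat \<Rightarrow> real \<Rightarrow> int \<Rightarrow> real \<Rightarrow> (nat \<Rightarrow> real) set" where
  "net d \<eta> K \<rho> = {y \<in> grid d \<eta> K. \<rho> \<le> (\<Sum>i<d. (y i)\<^sup>2)}"

lemma net_finite: "finite (net d \<eta> K \<rho>)"
proof -
  have "finite (grid d \<eta> K)" unfolding grid_def by (intro finite_imageI finite_PiE) simp_all
  moreover have "net d \<eta> K \<rho> \<subseteq> grid d \<eta> K" unfolding net_def by (rule Collect_restrict)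
  ultimately show ?thesis by (rule finite_subset[rotated])
qed

lemma net_card: "K \<ge> 0 \<Longrightarrow> real (card (net d \<eta> K \<rho>)) \<le> (2 * real_of_int K + 1) ^ d"
proof -
  assume K: "K \<ge> 0"
  have "card (net d \<eta> K \<rho>) \<le> card (grid d \<eta> K)"
    unfolding net_def grid_def by (intro card_mono finite_imageI finite_PiE) auto
  also have "\<dots> \<le> card (PiE {..<d} (\<lambda>_. {-K..K}))"
    unfolding grid_def by (rule card_image_le) (intro finite_PiE; simp)
  also have "\<dots> = (nat (2 * K + 1)) ^ d" by (simp add: card_PiE)
  finally have "real (card (net d \<eta> K \<rho>)) \<le> real (nat (2 * K + 1) ^ d)" by linarith
  also have "\<dots> = (2 * real_of_int K + 1) ^ d" using K by (simp add: of_nat_power)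
  finally show ?thesis .
qed

lemma net_cover:
  assumes x: "x \<in> unit_sphere d" and e: "\<eta> > 0" and K: "1 / \<eta> + 1 \<le> real_of_int K"
    and rho: "\<rho> \<le> 1 - 2 * real d * \<eta>"
  shows "\<exists>y\<in>net d \<eta> K \<rho>. \<forall>i<d. \<bar>x i - y i\<bar> \<le> \<eta>"
proof -
  define k where "k = restrict (\<lambda>i. \<lfloor>x i / \<eta>\<rfloor>) {..<d}"
  define y where "y i = (if i < d then \<eta> * real_of_int (k i) else 0)" for i
  have kr: "k \<in> PiE {..<d} (\<lambda>_. {-K..K})"
  proof -
    have "\<lfloor>x i / \<eta>\<rfloor> \<in> {-K..K}" for i
    proof -
      have xi: "\<bar>x i\<bar> \<le> 1" by (rule sphere_coord_le[OF x])
      have "\<bar>x i / \<eta>\<bar> \<le> 1 / \<eta>" using xi e by (simp add: abs_divide divide_right_mono)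
      then have a: "x i / \<eta> \<le> 1 / \<eta>" "- (1 / \<eta>) \<le> x i / \<eta>" by linarith+
      have "real_of_int \<lfloor>x i / \<eta>\<rfloor> \<le> real_of_int K" using a K by linarith
      moreover have "real_of_int \<lfloor>x i / \<eta>\<rfloor> > x i / \<eta> - 1" by linarith
      then have "real_of_int \<lfloor>x i / \<eta>\<rfloor> \<ge> - real_of_int K" using a K by linarith
      ultimately show ?thesis by simp
    qed
    then show ?thesis unfolding k_def by auto
  qed
  have err: "0 \<le> x i - y i \<and> x i - y i \<le> \<eta>" if "i < d" for i
  proof -
    have f1: "real_of_int \<lfloor>x i / \<eta>\<rfloor> \<le> x i / \<eta>" by linarith
    have 1: "\<eta> * real_of_int \<lfloor>x i / \<eta>\<rfloor> \<le> x i" using mult_left_mono[OF f1, of \<eta>] e by simp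
    have f2: "x i / \<eta> - 1 \<le> real_of_int \<lfloor>x i / \<eta>\<rfloor>" by linarith
    have "x i - \<eta> \<le> \<eta> * real_of_int \<lfloor>x i / \<eta>\<rfloor>" using mult_left_mono[OF f2, of \<eta>] e by (simp add: right_diff_distrib)
    with 1 show ?thesis using that unfolding y_def k_def by simp
  qed
  have ynorm: "\<rho> \<le> (\<Sum>i<d. (y i)\<^sup>2)"
  proof -
    have yb: "(x i)\<^sup>2 - 2 * \<eta> \<le> (y i)\<^sup>2" if "i < d" for i
    proof -
      define ei where "ei = x i - y i"
      have ee: "0 \<le> ei" "ei \<le> \<eta>" using err[OF that] unfolding ei_def by auto
      have xi: "\<bar>x i\<bar> \<le> 1" by (rule sphere_coord_le[OF x])
      have "(y i)\<^sup>2 = (x i)\<^sup>2 - 2 * (x i * ei) + ei\<^sup>2" unfolding ei_def by (simp add: power2_eq_square algebra_simps)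
      moreover have "x i * ei \<le> \<eta>"
      proof -
        have "x i * ei \<le> \<bar>x i\<bar> * ei" using ee by (simp add: mult_right_mono)
        also have "\<dots> \<le> 1 * \<eta>" using xi ee by (intro mult_mono) auto
        finally show ?thesis by simp
      qed
      ultimately show ?thesis using zero_le_power2[of ei] by linarith
    qed
    have "(\<Sum>i<d. (x i)\<^sup>2 - 2 * \<eta>) \<le> (\<Sum>i<d. (y i)\<^sup>2)" by (rule sum_mono) (rule yb, simp)
    moreover have "(\<Sum>i<d. (x i)\<^sup>2 - 2 * \<eta>) = 1 - 2 * real d * \<eta>"
      using x unfolding unit_sphere_def by (simp add: sum_subtractf)
    ultimately show ?thesis using rho by linarith
  qed
  have "y \<in> grid d \<eta> K" unfolding grid_def y_def using kr by blast
  then have "y \<in> net d \<eta> K \<rho>" using ynorm unfolding net_def by blast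
  moreover have "\<forall>i<d. \<bar>x i - y i\<bar> \<le> \<eta>" using err by fastforce
  ultimately show ?thesis by blast
qed

lemma det_bound:
  assumes n: "n > 0" and j: "j < n" and Q: "Qrow d y b M j u"
    and xy: "\<forall>i<d. \<bar>x i - y i\<bar> \<le> \<eta>" and e: "\<eta> \<ge> 0"
    and a: "a \<le> b - real d * M * \<eta>"
  shows "a \<le> gfun d n u x"
proof -
  have Q1: "b \<le> (\<Sum>i<d. y i * u (j, i))" and Q2: "\<forall>i<d. \<bar>u (j, i)\<bar> \<le> M"
    using Q unfolding Qrow_def by auto
  have "(\<Sum>i<d. y i * u (j, i)) - (\<Sum>i<d. u (j, i) * x i) = (\<Sum>i<d. u (j, i) * (y i - x i))"
    by (simp add: sum_subtractf algebra_simps)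
  also have "\<dots> \<le> (\<Sum>i<d. M * \<eta>)"
  proof (rule sum_mono)
    fix i assume i: "i \<in> {..<d}"
    have "\<bar>u (j, i) * (y i - x i)\<bar> = \<bar>u (j, i)\<bar> * \<bar>x i - y i\<bar>" by (simp add: abs_mult abs_minus_commute)
    also have "\<dots> \<le> M * \<eta>" using Q2 xy i e by (intro mult_mono) auto
    finally show "u (j, i) * (y i - x i) \<le> M * \<eta>" by linarith
  qed
  also have "\<dots> = real d * M * \<eta>" by simp
  finally have "b - real d * M * \<eta> \<le> (\<Sum>i<d. u (j, i) * x i)" using Q1 by linarith
  also have "\<dots> \<le> gfun d n u x" by (rule gfun_ge[OF j])
  finally show ?thesis using a by linarith
qed

lemma union_bound:
  assumes d: "d > 0" and n: "n > 0" and fin: "finite N"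
    and q: "\<And>y j. y \<in> N \<Longrightarrow> j < n \<Longrightarrow> measure (gauss_sample d n) {\<omega> \<in> space (gauss_sample d n). Qrow d y b M j \<omega>} \<ge> q"
  shows "measure (gauss_sample d n) {\<omega> \<in> space (gauss_sample d n). \<forall>y\<in>N. \<exists>j<n. Qrow d y b M j \<omega>}
     \<ge> 1 - real (card N) * exp (- q * real n)"
proof -
  let ?P = "gauss_sample d n"
  interpret prob_space ?P by (rule prob_gs[OF d])
  let ?B = "\<lambda>y. {\<omega> \<in> space ?P. \<forall>j<n. \<not> Qrow d y b M j \<omega>}"
  have Bs: "?B y \<in> events" for y
  proof -
    have eq1: "?B y = space ?P - (\<Union>j\<in>{..<n}. {\<omega> \<in> space ?P. Qrow d y b M j \<omega>})" by auto
    have "(\<Union>j\<in>{..<n}. {\<omega> \<in> space ?P. Qrow d y b M j \<omega>}) \<in> events"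
      by (rule sets.finite_UN) (simp, rule Qrow_sets)
    then show ?thesis unfolding eq1 by (rule sets.compl_sets)
  qed
  have UB: "(\<Union>y\<in>N. ?B y) \<in> events" by (rule sets.finite_UN[OF fin]) (rule Bs)
  have eq: "{\<omega> \<in> space ?P. \<forall>y\<in>N. \<exists>j<n. Qrow d y b M j \<omega>} = space ?P - (\<Union>y\<in>N. ?B y)" by auto
  have "prob (\<Union>y\<in>N. ?B y) \<le> (\<Sum>y\<in>N. prob (?B y))"
    by (rule finite_measure_subadditive_finite[OF fin]) (rule image_subsetI, rule Bs)
  also have "\<dots> \<le> (\<Sum>y\<in>N. exp (- q * real n))"
  proof (rule sum_mono)
    fix y assume y: "y \<in> N"
    show "prob (?B y) \<le> exp (- q * real n)"
      by (rule no_row_prob[OF d n]) (rule q[OF y])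
  qed
  also have "\<dots> = real (card N) * exp (- q * real n)" by simp
  finally have "prob (\<Union>y\<in>N. ?B y) \<le> real (card N) * exp (- q * real n)" .
  moreover have "prob (space ?P - (\<Union>y\<in>N. ?B y)) = 1 - prob (\<Union>y\<in>N. ?B y)"
    by (rule prob_compl[OF UB])
  ultimately show ?thesis unfolding eq by linarith
qed

lemma s_bound:
  fixes e L :: real assumes e: "0 < e" "e \<le> 1" and L: "L \<ge> 0"
  shows "(sqrt ((2 - e/2) * L / (1 - e/8)) + 1)\<^sup>2 / 2 \<le> (1 - e/8) * L + 2 * sqrt L + 1/2"
proof -
  define \<rho> where "\<rho> = 1 - e/8"
  define s where "s = sqrt ((2 - e/2) * L / \<rho>)"
  have r: "\<rho> \<ge> 7/8" "\<rho> > 0" unfolding \<rho>_def using e by auto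
  have s0: "s \<ge> 0" unfolding s_def using e L r by simp
  have s2: "s\<^sup>2 = (2 - e/2) * L / \<rho>" unfolding s_def using e L r by simp
  have h1: "s\<^sup>2 / 2 \<le> \<rho> * L"
  proof -
    have "(2 - e/2) \<le> 2 * \<rho>\<^sup>2" unfolding \<rho>_def by (simp add: power2_eq_square field_simps)
    then have "(2 - e/2) * L \<le> 2 * \<rho>\<^sup>2 * L" using L by (intro mult_right_mono) auto
    then show ?thesis unfolding s2 using r by (simp add: field_simps power2_eq_square)
  qed
  have h2: "s \<le> 2 * sqrt L"
  proof -
    have "(2 - e/2) / \<rho> \<le> 4" using r e by (simp add: field_simps)
    then have "(2 - e/2) * L / \<rho> \<le> 4 * L" using L r
      by (metis mult.commute mult_right_mono times_divide_eq_right)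
    then have "s \<le> sqrt (4 * L)" unfolding s_def by (rule real_sqrt_le_mono)
    also have "sqrt (4 * L) = 2 * sqrt L" by (simp add: real_sqrt_mult)
    finally show ?thesis .
  qed
  have "(s + 1)\<^sup>2 / 2 = s\<^sup>2 / 2 + s + 1/2" by (simp add: power2_eq_square field_simps)
  also have "\<dots> \<le> \<rho> * L + 2 * sqrt L + 1/2" using h1 h2 by linarith
  finally show ?thesis unfolding s_def \<rho>_def .
qed

lemma main_small:
  fixes c e :: real
  assumes c: "c > 0" and e: "0 < e" "e \<le> 1"
  shows "\<exists>d0::nat. \<forall>d\<ge>d0. \<forall>n::nat. real n \<ge> c * (real d)\<^sup>2 / ln (real d) \<longrightarrow>
           measure (gauss_sample d n)
             {u \<in> space (gauss_sample d n). sqrt ((2 - e) * ln (real d) / real d) \<le> inf_max_proj d n u}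
           \<ge> 1 - exp (- 1 * real d)"
proof -
  define \<kappa> where "\<kappa> = sqrt (2 - e/2) - sqrt (2 - e)"
  have k0: "\<kappa> > 0" unfolding \<kappa>_def using e by simp
  define p0 where "p0 d = exp (-(1-e/8) * ln (real d) - 2 * sqrt (ln (real d)) - 1/2) / sqrt (2*pi)" for d :: nat
  have evA: "\<forall>\<^sub>F d in sequentially. 2 / (real d)\<^sup>2 \<le> exp (-(1-e/8) * ln (real d) - 2 * sqrt (ln (real d)) - 1/2) / sqrt (2*pi)"
    using c e by real_asymp
  have evB: "\<forall>\<^sub>F d in sequentially. real d * (ln 5 + 3 * ln (real d) + 1) \<le>
     (exp (-(1-e/8) * ln (real d) - 2 * sqrt (ln (real d)) - 1/2) / sqrt (2*pi) / 2) * (c * (real d)\<^sup>2 / ln (real d))"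
    using c e by real_asymp
  have evC: "\<forall>\<^sub>F d in sequentially. 1 / real d \<le> \<kappa> * sqrt (ln (real d) / real d)"
    using k0 by real_asymp
  have evD: "\<forall>\<^sub>F d in sequentially. 2 / (real d)\<^sup>2 \<le> e / 8"
    using e by real_asymp
  have evE: "\<forall>\<^sub>F d in sequentially. (3::nat) \<le> d" by (rule eventually_ge_at_top)
  have "\<forall>\<^sub>F d in sequentially. (2 / (real d)\<^sup>2 \<le> p0 d) \<and>
      (real d * (ln 5 + 3 * ln (real d) + 1) \<le> (p0 d / 2) * (c * (real d)\<^sup>2 / ln (real d))) \<and>
      (1 / real d \<le> \<kappa> * sqrt (ln (real d) / real d)) \<and> (2 / (real d)\<^sup>2 \<le> e / 8) \<and> (3::nat) \<le> d"
    using evA evB evC evD evE unfolding p0_def by eventually_elim auto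
  then obtain d0 where D: "\<And>d. d \<ge> d0 \<Longrightarrow> (2 / (real d)\<^sup>2 \<le> p0 d) \<and>
      (real d * (ln 5 + 3 * ln (real d) + 1) \<le> (p0 d / 2) * (c * (real d)\<^sup>2 / ln (real d))) \<and>
      (1 / real d \<le> \<kappa> * sqrt (ln (real d) / real d)) \<and> (2 / (real d)\<^sup>2 \<le> e / 8) \<and> (3::nat) \<le> d"
    unfolding eventually_sequentially by blast
  show ?thesis
  proof (intro exI allI impI)
    fix d n :: nat
    assume dd: "d \<ge> d0" and hn: "real n \<ge> c * (real d)\<^sup>2 / ln (real d)"
    note D = D[OF dd]
    let ?P = "gauss_sample d n"
    define L where "L = ln (real d)"
    have d3: "d \<ge> 3" using D by simp
    have d0': "d > 0" using d3 by simp
    have rd: "real d \<ge> 3" using d3 by simp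
    have L1: "L \<ge> 1"
    proof -
      have "exp 1 \<le> real d" using exp_le rd by linarith
      then have "ln (exp 1) \<le> ln (real d)" using d0' by (subst ln_le_cancel_iff) auto
      then show ?thesis unfolding L_def by simp
    qed
    have npos: "real n > 0"
    proof -
      have "c * (real d)\<^sup>2 / ln (real d) > 0" using c d3 L1 unfolding L_def by (intro divide_pos_pos mult_pos_pos) auto
      with hn show ?thesis by linarith
    qed
    then have n0: "n > 0" by simp
    define \<eta> where "\<eta> = 1 / (real d)^3"
    define K where "K = int (d^3) + 1"
    define M where "M = real d"
    define \<rho> where "\<rho> = 1 - e/8"
    define b where "b = sqrt ((2 - e/2) * L / real d)"
    define a where "a = sqrt ((2 - e) * L / real d)"
    define q where "q = exp (-((b / sqrt (\<rho> / real d) + 1)\<^sup>2) / 2) / sqrt (2*pi) - 1 / M\<^sup>2"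
    define N where "N = net d \<eta> K \<rho>"
    have e0: "\<eta> > 0" unfolding \<eta>_def using d0' by simp
    have r0: "\<rho> > 0" unfolding \<rho>_def using e by simp
    have b0: "b \<ge> 0" unfolding b_def using e L1 by simp
    have M0: "M > 0" unfolding M_def using d0' by simp
    have rowq: "q \<le> measure ?P {\<omega> \<in> space ?P. Qrow d y b M j \<omega>}" if "y \<in> N" "j < n" for y j
    proof -
      have "\<rho> \<le> (\<Sum>i<d. (y i)\<^sup>2)" using that unfolding N_def net_def by simp
      from row_event_prob[OF d0' that(2) r0 this b0 M0] show ?thesis unfolding q_def .
    qed
    define G where "G = {\<omega> \<in> space ?P. \<forall>y\<in>N. \<exists>j<n. Qrow d y b M j \<omega>}"
    have PG: "measure ?P G \<ge> 1 - real (card N) * exp (- q * real n)"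
      unfolding G_def N_def by (rule union_bound[OF d0' n0 net_finite]) (rule rowq, auto simp: N_def)
    define T where "T = {u \<in> space ?P. a \<le> inf_max_proj d n u}"
    have Kc: "1 / \<eta> + 1 \<le> real_of_int K" unfolding \<eta>_def K_def by simp
    have rc: "\<rho> \<le> 1 - 2 * real d * \<eta>"
    proof -
      have "2 * real d * \<eta> = 2 / (real d)\<^sup>2" unfolding \<eta>_def using d0' by (simp add: power2_eq_square power3_eq_cube)
      then show ?thesis unfolding \<rho>_def using D by linarith
    qed
    have ac: "a \<le> b - real d * M * \<eta>"
    proof -
      have "real d * M * \<eta> = 1 / real d" unfolding M_def \<eta>_def using d0' by (simp add: power3_eq_cube)
      moreover have "b - a = \<kappa> * sqrt (L / real d)"
        unfolding a_def b_def \<kappa>_def using e by (simp add: real_sqrt_mult[symmetric] left_diff_distrib mult.assoc)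
      ultimately show ?thesis using D unfolding L_def by linarith
    qed
    have GT: "G \<subseteq> T"
    proof
      fix u assume u: "u \<in> G"
      then have us: "u \<in> space ?P" and uG: "\<forall>y\<in>N. \<exists>j<n. Qrow d y b M j u" unfolding G_def by auto
      have "\<forall>x\<in>unit_sphere d. a \<le> gfun d n u x"
      proof
        fix x assume x: "x \<in> unit_sphere d"
        obtain y where y: "y \<in> N" "\<forall>i<d. \<bar>x i - y i\<bar> \<le> \<eta>"
          using net_cover[OF x e0 Kc rc] unfolding N_def by blast
        obtain j where j: "j < n" "Qrow d y b M j u" using uG y(1) by blast
        show "a \<le> gfun d n u x" by (rule det_bound[OF n0 j y(2) _ ac]) (use e0 in simp)
      qed
      then show "u \<in> T" unfolding T_def using us inf_ge_iff[OF d0' n0] by simp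
    qed
    have PT: "measure ?P T \<ge> measure ?P G"
    proof -
      interpret prob_space ?P by (rule prob_gs[OF d0'])
      show ?thesis unfolding T_def by (rule finite_measure_mono[OF GT[unfolded T_def] target_sets[OF d0' n0]])
    qed
    have key: "real (card N) * exp (- q * real n) \<le> exp (- 1 * real d)"
    proof -
      have A: "2 / (real d)\<^sup>2 \<le> p0 d" and B: "real d * (ln 5 + 3 * L + 1) \<le> (p0 d / 2) * (c * (real d)\<^sup>2 / L)"
        using D unfolding L_def by auto
      have sb: "b / sqrt (\<rho> / real d) = sqrt ((2 - e/2) * L / (1 - e/8))"
        unfolding b_def \<rho>_def using d0' e by (simp add: real_sqrt_divide[symmetric])
      have "(b / sqrt (\<rho> / real d) + 1)\<^sup>2 / 2 \<le> (1 - e/8) * L + 2 * sqrt L + 1/2"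
        unfolding sb by (rule s_bound[OF e]) (use L1 in simp)
      then have "-(1-e/8) * L - 2 * sqrt L - 1/2 \<le> -((b / sqrt (\<rho> / real d) + 1)\<^sup>2) / 2"
        by linarith
      then have "exp (-(1-e/8) * L - 2 * sqrt L - 1/2) \<le> exp (-((b / sqrt (\<rho> / real d) + 1)\<^sup>2) / 2)"
        by (subst exp_le_cancel_iff)
      then have "p0 d \<le> exp (-((b / sqrt (\<rho> / real d) + 1)\<^sup>2) / 2) / sqrt (2*pi)"
        unfolding p0_def L_def by (intro divide_right_mono) auto
      then have q1: "p0 d - 1 / (real d)\<^sup>2 \<le> q" unfolding q_def M_def by simp
      have q2: "p0 d / 2 \<le> q" using q1 A by simp
      have p0pos: "p0 d \<ge> 0" unfolding p0_def by simp
      have "(p0 d / 2) * (c * (real d)\<^sup>2 / L) \<le> q * real n"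
      proof -
        have "(p0 d / 2) * (c * (real d)\<^sup>2 / L) \<le> (p0 d / 2) * real n"
          using hn p0pos unfolding L_def by (intro mult_left_mono) auto
        also have "\<dots> \<le> q * real n" using q2 npos by (intro mult_right_mono) auto
        finally show ?thesis .
      qed
      with B have qn: "real d * (ln 5 + 3 * L + 1) \<le> q * real n" by linarith
      have cardN: "real (card N) \<le> (2 * real_of_int K + 1) ^ d" unfolding N_def
        by (rule net_card) (simp add: K_def)
      also have "\<dots> = (2 * (real d)^3 + 3) ^ d" unfolding K_def by (simp add: add.commute)
      also have "\<dots> \<le> (5 * (real d)^3) ^ d"
      proof (rule power_mono)
        have "1 \<le> (real d)^3" using rd by simp
        then show "2 * real d ^ 3 + 3 \<le> 5 * real d ^ 3" by simp
      qed simp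
      also have "\<dots> = exp (real d * (ln 5 + 3 * L))"
      proof -
        have "ln (5 * (real d)^3) = ln 5 + 3 * L" unfolding L_def using d0' by (simp add: ln_mult ln_realpow)
        moreover have "exp (ln (5 * (real d)^3)) = 5 * (real d)^3" using d0' by simp
        ultimately show ?thesis by (metis exp_of_nat_mult)
      qed
      finally have cN: "real (card N) \<le> exp (real d * (ln 5 + 3 * L))" .
      have "real (card N) * exp (- q * real n) \<le> exp (real d * (ln 5 + 3 * L)) * exp (- (real d * (ln 5 + 3 * L + 1)))"
        using cN qn by (intro mult_mono) auto
      also have "\<dots> = exp (- 1 * real d)" by (simp add: exp_add[symmetric] algebra_simps)
      finally show ?thesis .
    qed
    have "measure ?P T \<ge> 1 - exp (- 1 * real d)" using PG PT key by linarith
    then show "measure ?P {u \<in> space ?P. sqrt ((2 - e) * ln (real d) / real d) \<le> inf_max_proj d n u} \<ge> 1 - exp (- 1 * real d)"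
      unfolding T_def a_def L_def .
  qed
qed


theorem lemma2p4:
  fixes c \<epsilon> :: real
  assumes "c > 0" and "\<epsilon> > 0"
  shows "\<exists>C>0. \<exists>d0::nat. \<forall>d\<ge>d0. \<forall>n::nat. real n \<ge> c * (real d)\<^sup>2 / ln (real d) \<longrightarrow>
           measure (gauss_sample d n)
             {u \<in> space (gauss_sample d n).
                inf_max_proj d n u \<ge> sqrt ((2 - \<epsilon>) * ln (real d) / real d)}
           \<ge> 1 - exp (- C * real d)"
proof -
  define e where "e = min \<epsilon> 1"
  have e: "0 < e" "e \<le> 1" "e \<le> \<epsilon>" unfolding e_def using assms by auto
  obtain d0 where d0: "\<And>d n. d \<ge> d0 \<Longrightarrow> real n \<ge> c * (real d)\<^sup>2 / ln (real d) \<Longrightarrow>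
           measure (gauss_sample d n)
             {u \<in> space (gauss_sample d n). sqrt ((2 - e) * ln (real d) / real d) \<le> inf_max_proj d n u}
           \<ge> 1 - exp (- 1 * real d)"
    using main_small[OF assms(1) e(1,2)] by blast
  have main: "\<forall>d\<ge>max d0 3. \<forall>n::nat. real n \<ge> c * (real d)\<^sup>2 / ln (real d) \<longrightarrow>
           measure (gauss_sample d n)
             {u \<in> space (gauss_sample d n).
                inf_max_proj d n u \<ge> sqrt ((2 - \<epsilon>) * ln (real d) / real d)}
           \<ge> 1 - exp (- 1 * real d)"
  proof (intro allI impI)
    fix d n :: nat
    assume dd: "max d0 3 \<le> d" and hn: "c * (real d)\<^sup>2 / ln (real d) \<le> real n"
    let ?P = "gauss_sample d n"
    have d3: "d \<ge> 3" using dd by simp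
    then have dpos: "d > 0" by simp
    have L0: "ln (real d) > 0" using d3 by simp
    have "c * (real d)\<^sup>2 / ln (real d) > 0" using assms(1) d3 L0 by (intro divide_pos_pos mult_pos_pos) auto
    then have npos: "n > 0" using hn by simp
    have tle: "sqrt ((2 - \<epsilon>) * ln (real d) / real d) \<le> sqrt ((2 - e) * ln (real d) / real d)"
    proof (rule real_sqrt_le_mono, rule divide_right_mono)
      show "(2 - \<epsilon>) * ln (real d) \<le> (2 - e) * ln (real d)" using e L0 by (intro mult_right_mono) auto
    qed simp
    interpret prob_space ?P by (rule prob_gs[OF dpos])
    have sub: "{u \<in> space ?P. sqrt ((2 - e) * ln (real d) / real d) \<le> inf_max_proj d n u}
       \<subseteq> {u \<in> space ?P. sqrt ((2 - \<epsilon>) * ln (real d) / real d) \<le> inf_max_proj d n u}"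
    proof (rule Collect_mono, intro impI conjI)
      fix u assume "u \<in> space ?P \<and> sqrt ((2 - e) * ln (real d) / real d) \<le> inf_max_proj d n u"
      then show "u \<in> space ?P" "sqrt ((2 - \<epsilon>) * ln (real d) / real d) \<le> inf_max_proj d n u"
        using tle by (blast, linarith)
    qed
    have "1 - exp (- 1 * real d) \<le> measure ?P {u \<in> space ?P. sqrt ((2 - e) * ln (real d) / real d) \<le> inf_max_proj d n u}"
      using d0[OF _ hn] dd by simp
    also have "\<dots> \<le> measure ?P {u \<in> space ?P. sqrt ((2 - \<epsilon>) * ln (real d) / real d) \<le> inf_max_proj d n u}"
      by (rule finite_measure_mono[OF sub target_sets[OF dpos npos]])
    finally show "1 - exp (- 1 * real d) \<le> measure ?P {u \<in> space ?P. sqrt ((2 - \<epsilon>) * ln (real d) / real d) \<le> inf_max_proj d n u}" .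
  qed
  show ?thesis
    apply (rule exI[where x="1::real"])
    apply (rule conjI)
     apply simp
    apply (rule exI[where x="max d0 3"])
    using main by simp
qed

end
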